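(* Let $\mathcal{C}$ be a covering of a finite set $E$ such that $SH$ is the closure operator of a matroid on $E$. Then $\mathcal{I}_{SH}(\mathcal{C})\subseteq\mathcal{I}(\mathcal{C})$ and $\mathcal{L}_{SH}(M(\mathcal{C}))\subseteq\mathcal{L}(M(\mathcal{C}))$.
   Context: A covering of $E$ is a family of nonempty subsets of $E$ with union $E$. $SH(X)=\bigcup\{K\in\mathcal{C}:K\cap X\neq\emptyset\}$. When $SH$ is the closure operator of a matroid, $\mathcal{I}_{SH}(\mathcal{C})=\{I\subseteq E:x\notin SH(I-\{x\})\ \forall x\in I\}$ is its family of independent sets and $\mathcal{L}_{SH}(M(\mathcal{C}))=\{X:SH(X)=X\}$ its set of closed sets. $\mathcal{I}(\mathcal{C})$ is the family of partial transversals of $\mathcal{C}$ (sets of distinct elements $e_1,\dots,e_k$ with $e_j\in K_{i_j}$ for distinct blocks $K_{i_1},\dots,K_{i_k}$), the independent sets of the transversal matroid $M(\mathcal{C})$, and $\mathcal{L}(M(\mathcal{C}))$ is the set of closed sets of $M(\mathcal{C})$, where $cl(X)=\{a:r(X\cup\{a\})=r(X)\}$. *)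

theory Defs
  imports Main
begin

definition covering :: "'a set set \<Rightarrow> 'a set \<Rightarrow> bool" where
  "covering C E \<longleftrightarrow> (\<forall>K\<in>C. K \<noteq> {} \<and> K \<subseteq> E) \<and> \<Union>C = E"

definition SH :: "'a set set \<Rightarrow> 'a set \<Rightarrow> 'a set" where
  "SH C X = \<Union>{K\<in>C. K \<inter> X \<noteq> {}}"

definition matroid_closure :: "'a set \<Rightarrow> ('a set \<Rightarrow> 'a set) \<Rightarrow> bool" where
  "matroid_closure E cl \<longleftrightarrow>
     (\<forall>X. X \<subseteq> E \<longrightarrow> X \<subseteq> cl X \<and> cl X \<subseteq> E) \<and>
     (\<forall>X Y. X \<subseteq> Y \<and> Y \<subseteq> E \<longrightarrow> cl X \<subseteq> cl Y) \<and>
     (\<forall>X. X \<subseteq> E \<longrightarrow> cl (cl X) = cl X) \<and>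
     (\<forall>X x y. X \<subseteq> E \<and> x \<in> E \<and> y \<in> E \<and> y \<in> cl (insert x X) \<and> y \<notin> cl X
        \<longrightarrow> x \<in> cl (insert y X))"

definition indep_SH :: "'a set set \<Rightarrow> 'a set \<Rightarrow> 'a set set" where
  "indep_SH C E = {I. I \<subseteq> E \<and> (\<forall>x\<in>I. x \<notin> SH C (I - {x}))}"

definition closed_SH :: "'a set set \<Rightarrow> 'a set \<Rightarrow> 'a set set" where
  "closed_SH C E = {X. X \<subseteq> E \<and> SH C X = X}"

definition partial_transversal :: "'a set set \<Rightarrow> 'a set \<Rightarrow> bool" where
  "partial_transversal C I \<longleftrightarrow> (\<exists>f. inj_on f I \<and> (\<forall>e\<in>I. f e \<in> C \<and> e \<in> f e))"

definition transversal_indep :: "'a set set \<Rightarrow> 'a set \<Rightarrow> 'a set set" where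
  "transversal_indep C E = {I. I \<subseteq> E \<and> partial_transversal C I}"

text \<open>Rank of the transversal matroid M(C) (for finite X).\<close>
definition trank :: "'a set set \<Rightarrow> 'a set \<Rightarrow> nat" where
  "trank C X = Max {card I | I. I \<subseteq> X \<and> partial_transversal C I}"

definition tcl :: "'a set set \<Rightarrow> 'a set \<Rightarrow> 'a set \<Rightarrow> 'a set" where
  "tcl C E X = {a\<in>E. trank C (insert a X) = trank C X}"

definition transversal_closed :: "'a set set \<Rightarrow> 'a set \<Rightarrow> 'a set set" where
  "transversal_closed C E = {X. X \<subseteq> E \<and> tcl C E X = X}"

end

theory Submission
  imports Defs
begin

lemma pt_empty: "partial_transversal C {}"
  unfolding partial_transversal_def by auto

lemma trank_set_finite:
  assumes "finite X"
  shows "finite {card I | I. I \<subseteq> X \<and> partial_transversal C I}"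
proof -
  have "{card I | I. I \<subseteq> X \<and> partial_transversal C I} \<subseteq> {0..card X}"
    using assms by (auto intro: card_mono)
  then show ?thesis using finite_subset by blast
qed

lemma trank_ge:
  assumes "finite X" "I \<subseteq> X" "partial_transversal C I"
  shows "card I \<le> trank C X"
  unfolding trank_def using assms trank_set_finite[OF assms(1), of C]
  by (intro Max_ge) auto

lemma trank_obtain:
  assumes "finite X"
  obtains I where "I \<subseteq> X" "partial_transversal C I" "trank C X = card I"
proof -
  have ne: "{card I | I. I \<subseteq> X \<and> partial_transversal C I} \<noteq> {}"
    using pt_empty by blast
  have "trank C X \<in> {card I | I. I \<subseteq> X \<and> partial_transversal C I}"
    unfolding trank_def using Max_in[OF trank_set_finite[OF assms] ne] .
  then show ?thesis using that by blast
qed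

theorem proposition26:
  fixes C :: "'a set set" and E :: "'a set"
  assumes "finite E"
    and "covering C E"
    and "matroid_closure E (SH C)"
  shows "indep_SH C E \<subseteq> transversal_indep C E
     \<and> closed_SH C E \<subseteq> transversal_closed C E"
proof
  show "indep_SH C E \<subseteq> transversal_indep C E"
  proof
    fix I assume "I \<in> indep_SH C E"
    then have IE: "I \<subseteq> E" and ind: "\<forall>x\<in>I. x \<notin> SH C (I - {x})"
      unfolding indep_SH_def by auto
    have ex: "\<forall>e\<in>I. \<exists>K. K \<in> C \<and> e \<in> K"
      using IE assms(2) unfolding covering_def by blast
    define f where "f e = (SOME K. K \<in> C \<and> e \<in> K)" for e
    have f: "\<forall>e\<in>I. f e \<in> C \<and> e \<in> f e"
      using ex unfolding f_def by (metis (mono_tags, lifting) someI_ex)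
    have "inj_on f I"
    proof (rule inj_onI)
      fix x y assume xy: "x \<in> I" "y \<in> I" "f x = f y"
      show "x = y"
      proof (rule ccontr)
        assume "x \<noteq> y"
        then have "y \<in> f x \<inter> (I - {x})" using f xy by auto
        then have "x \<in> SH C (I - {x})" unfolding SH_def using f xy by blast
        then show False using ind xy by blast
      qed
    qed
    then show "I \<in> transversal_indep C E"
      unfolding transversal_indep_def partial_transversal_def using IE f by blast
  qed
next
  show "closed_SH C E \<subseteq> transversal_closed C E"
  proof
    fix X assume "X \<in> closed_SH C E"
    then have XE: "X \<subseteq> E" and cl: "SH C X = X" unfolding closed_SH_def by auto
    have finX: "finite X" using XE assms(1) finite_subset by blast
    have "tcl C E X = X"
    proof
      show "X \<subseteq> tcl C E X" unfolding tcl_def using XE by (auto simp: insert_absorb)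
    next
      show "tcl C E X \<subseteq> X"
      proof
        fix a assume a: "a \<in> tcl C E X"
        then have aE: "a \<in> E" and eq: "trank C (insert a X) = trank C X"
          unfolding tcl_def by auto
        show "a \<in> X"
        proof (rule ccontr)
          assume aX: "a \<notin> X"
          obtain I where I: "I \<subseteq> X" "partial_transversal C I" "trank C X = card I"
            using trank_obtain[OF finX] by blast
          obtain f where f: "inj_on f I" "\<forall>e\<in>I. f e \<in> C \<and> e \<in> f e"
            using I(2) unfolding partial_transversal_def by blast
          obtain K where K: "K \<in> C" "a \<in> K"
            using aE assms(2) unfolding covering_def by blast
          have fsub: "\<forall>e\<in>I. f e \<subseteq> X"
          proof
            fix e assume "e \<in> I"
            then have "f e \<in> C" "f e \<inter> X \<noteq> {}" using f I(1) by auto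
            then have "f e \<subseteq> SH C X" unfolding SH_def by blast
            then show "f e \<subseteq> X" using cl by simp
          qed
          have aI: "a \<notin> I" using aX I(1) by blast
          define g where "g = f(a := K)"
          have "inj_on g (insert a I)"
            unfolding g_def using f(1) aI fsub K aX
            by (auto simp: inj_on_def)
          moreover have "\<forall>e\<in>insert a I. g e \<in> C \<and> e \<in> g e"
            unfolding g_def using f(2) K aI by auto
          ultimately have "partial_transversal C (insert a I)"
            unfolding partial_transversal_def by blast
          then have "card (insert a I) \<le> trank C (insert a X)"
            using trank_ge[of "insert a X" "insert a I"] finX I(1) by blast
          moreover have "card (insert a I) = card I + 1"
            using aI finite_subset[OF I(1) finX] by simp
          ultimately show False using eq I(3) by simp
        qed
      qed
    qed
    then show "X \<in> transversal_closed C E"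
      unfolding transversal_closed_def using XE by blast
  qed
qed

end
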